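(* Let $G$ be a finite simple unmixed graph. Then the set $F$ of column vectors of the linear syzygy matrix $\mathcal{LS}(I_c(G))$ is a minimal system of generators of the $S$-submodule $S(F)\subseteq S^r$ generated by $F$ if and only if the graph $\mathcal{G}_{I_c(G)}$ has no strong $3$-cycles.
   Context: $G$ has vertices $t_1,\ldots,t_s$, $S=K[t_1,\ldots,t_s]$ with $K$ a field. $G$ is unmixed if all minimal vertex covers (inclusion-minimal sets of vertices meeting every edge) have equal size. Let $C_1,\ldots,C_r$ be the minimal vertex covers; $I_c(G)$ is generated by $u_i=\prod_{t_j\in C_i}t_j$. The graph $\mathcal{G}_{I_c(G)}$ has vertex set $\{C_1,\ldots,C_r\}$, with $\{C_i,C_j\}$ an edge iff $|C_i\cup C_j|=|C_i|+1$. For each edge $\{C_i,C_j\}$ with $i<j$ one has $C_j=(C_i\setminus\{t_{k'}\})\cup\{t_k\}$ for some vertices $t_k,t_{k'}$, and the corresponding column of $\mathcal{LS}(I_c(G))$ is $t_ke'_i-t_{k'}e'_j$, where $e'_1,\ldots,e'_r$ is the standard basis of $S^r$ (so $F$ consists of these vectors). A $3$-cycle $\{C_1,C_2,C_3,C_1\}$ of $\mathcal{G}_{I_c(G)}$ is strong if $C_2\setminus C_1=C_3\setminus C_1$. *)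

theory Defs
  imports Main "HOL-Library.Poly_Mapping"
begin

(* Finite simple graph on the vertex type 'v (vertex set = UNIV, 'v finite):
   edges are 2-element sets of vertices. *)
definition simple_graph :: "'v set set \<Rightarrow> bool" where
  "simple_graph E \<longleftrightarrow> (\<forall>e\<in>E. card e = 2)"

definition vertex_cover :: "'v set set \<Rightarrow> 'v set \<Rightarrow> bool" where
  "vertex_cover E C \<longleftrightarrow> (\<forall>e\<in>E. e \<inter> C \<noteq> {})"

definition min_vertex_cover :: "'v set set \<Rightarrow> 'v set \<Rightarrow> bool" where
  "min_vertex_cover E C \<longleftrightarrow> vertex_cover E C \<and> (\<forall>D. D \<subset> C \<longrightarrow> \<not> vertex_cover E D)"

definition unmixed :: "'v set set \<Rightarrow> bool" where
  "unmixed E \<longleftrightarrow> (\<forall>C D. min_vertex_cover E C \<and> min_vertex_cover E D \<longrightarrow> card C = card D)"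

(* The polynomial ring S = K[t_v : v vertex]: polynomials as finitely supported
   maps from monomials (exponent vectors 'v \<Rightarrow>\<^sub>0 nat) to coefficients. *)
type_synonym ('v, 'k) mpoly = "('v \<Rightarrow>\<^sub>0 nat) \<Rightarrow>\<^sub>0 'k"

definition var :: "'v \<Rightarrow> ('v, 'k::comm_ring_1) mpoly" where
  "var v = Poly_Mapping.single (Poly_Mapping.single v 1) 1"

definition cover_adj :: "'v set \<Rightarrow> 'v set \<Rightarrow> bool" where
  "cover_adj C D \<longleftrightarrow> C \<noteq> D \<and> card (C \<union> D) = card C + 1"

definition has_strong_3cycle :: "'v set set \<Rightarrow> bool" where
  "has_strong_3cycle E \<longleftrightarrow> (\<exists>C1 C2 C3.
     min_vertex_cover E C1 \<and> min_vertex_cover E C2 \<and> min_vertex_cover E C3 \<and>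
     cover_adj C1 C2 \<and> cover_adj C2 C3 \<and> cover_adj C3 C1 \<and>
     C2 - C1 = C3 - C1)"

(* Elements of S^r are represented as functions nat \<Rightarrow> S (components indexed 0..r-1). *)

definition ls_column :: "(nat \<Rightarrow> 'v set) \<Rightarrow> nat \<Rightarrow> nat \<Rightarrow> nat \<Rightarrow> ('v, 'k::comm_ring_1) mpoly" where
  "ls_column cov i j = (\<lambda>l. if l = i then var (the_elem (cov j - cov i))
                            else if l = j then - var (the_elem (cov i - cov j))
                            else 0)"

definition ls_columns :: "(nat \<Rightarrow> 'v set) \<Rightarrow> nat \<Rightarrow> (nat \<Rightarrow> ('v, 'k::comm_ring_1) mpoly) set" where
  "ls_columns cov r = {ls_column cov i j | i j. i < j \<and> j < r \<and> cover_adj (cov i) (cov j)}"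

definition submodule_span :: "(nat \<Rightarrow> 'a::comm_ring_1) set \<Rightarrow> (nat \<Rightarrow> 'a) set" where
  "submodule_span F = {v. \<exists>A a. finite A \<and> A \<subseteq> F \<and> v = (\<lambda>l. \<Sum>f\<in>A. a f * f l)}"

definition minimal_generating_set :: "(nat \<Rightarrow> 'a::comm_ring_1) set \<Rightarrow> bool" where
  "minimal_generating_set F \<longleftrightarrow> (\<forall>F'. F' \<subset> F \<longrightarrow> submodule_span F' \<noteq> submodule_span F)"

end

theory Submission
  imports Defs "HOL-Library.Function_Algebras" "HOL.Modules"
begin

definition sc :: "'a::comm_ring_1 \<Rightarrow> (nat \<Rightarrow> 'a) \<Rightarrow> (nat \<Rightarrow> 'a)" where
  "sc c v = (\<lambda>l. c * v l)"

interpretation fm: Modules.module sc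
  by unfold_locales (auto simp: sc_def fun_eq_iff algebra_simps)

lemma sum_fun_apply: "(sum f A :: nat \<Rightarrow> 'a::comm_monoid_add) l = (\<Sum>a\<in>A. f a l)"
  by (induction A rule: infinite_finite_induct) auto

lemma span_eq: "submodule_span F = fm.span (F :: (nat \<Rightarrow> 'a::comm_ring_1) set)"
  unfolding submodule_span_def fm.span_explicit
  by (auto simp: sc_def sum_fun_apply fun_eq_iff)

lemma var_lookup_self: "Poly_Mapping.lookup (var a :: ('v,'k::field) mpoly) (Poly_Mapping.single a (1::nat)) = 1"
  unfolding var_def by (simp only: lookup_single_eq)

lemma var_nz: "var a \<noteq> (0 :: ('v,'k::field) mpoly)"
proof
  assume "var a = (0 :: ('v,'k::field) mpoly)"
  then have "Poly_Mapping.lookup (var a :: ('v,'k::field) mpoly) (Poly_Mapping.single a (1::nat)) = 0" by simp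
  moreover have "Poly_Mapping.lookup (var a :: ('v,'k::field) mpoly) (Poly_Mapping.single a (1::nat)) = 1"
    by (rule var_lookup_self)
  ultimately show False by simp
qed

lemma var_coeff:
  assumes "x \<noteq> a"
  shows "Poly_Mapping.lookup (p * var x :: ('v,'k::comm_ring_1) mpoly) (Poly_Mapping.single a 1) = 0"
proof (rule ccontr)
  assume "Poly_Mapping.lookup (p * var x) (Poly_Mapping.single a 1) \<noteq> 0"
  then have "Poly_Mapping.single a 1 \<in> Poly_Mapping.keys (p * var x)" by (simp add: in_keys_iff)
  then have "Poly_Mapping.single a 1 \<in> {m + n | m n. m \<in> Poly_Mapping.keys p \<and> n \<in> Poly_Mapping.keys (var x :: ('v,'k) mpoly)}"
    using keys_mult[of p "var x :: ('v,'k) mpoly"] by (rule subsetD[rotated])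
  then obtain m n where mn: "Poly_Mapping.single a (1::nat) = m + n" "n \<in> Poly_Mapping.keys (var x :: ('v,'k) mpoly)"
    by (auto simp only: mem_Collect_eq)
  then have "n = Poly_Mapping.single x 1"
    by (auto simp: var_def split: if_splits)
  then have "Poly_Mapping.lookup (Poly_Mapping.single a (1::nat)) x = Poly_Mapping.lookup m x + 1"
    using mn by (simp add: lookup_add)
  with assms show False by (simp add: lookup_single)
qed

lemma adj_sing:
  assumes "finite C" "finite D" "card C = card D" "cover_adj C D"
  shows "\<exists>x y. D - C = {x} \<and> C - D = {y}"
proof -
  have u: "card C + card D = card (C \<union> D) + card (C \<inter> D)"
    using assms(1,2) by (rule card_Un_Int)
  have cu: "card (C \<union> D) = card C + 1" using assms(4) unfolding cover_adj_def by simp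
  have i1: "card (D - C) = card D - card (D \<inter> C)"
    using assms(2) by (simp add: card_Diff_subset_Int)
  have "card (D - C) = 1" using u cu assms(3) i1 by (simp add: Int_commute)
  moreover have "card (C - D) = 1" 
  proof -
    have "card (C - D) = card C - card (C \<inter> D)" using assms(1) by (simp add: card_Diff_subset_Int)
    then show ?thesis using u cu assms(3) by simp
  qed
  ultimately show ?thesis by (metis card_1_singletonE)
qed

lemma adj_sym: "card C = card D \<Longrightarrow> cover_adj C D \<Longrightarrow> cover_adj D C"
  unfolding cover_adj_def by (auto simp add: Un_commute)

lemma strong_lemma:
  assumes fin: "finite Ci" "finite Cj" "finite Cl"
    and cards: "card Cj = card Ci" "card Cl = card Ci"
    and ne: "Cj \<noteq> Cl"
    and a1: "cover_adj Ci Cj" and a2: "cover_adj Ci Cl"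
    and eq: "the_elem (Cl - Ci) = the_elem (Cj - Ci)"
  shows "cover_adj Cj Cl \<and> Cj - Ci = Cl - Ci \<and> cover_adj Cl Ci"
proof -
  obtain x y where xy: "Cj - Ci = {x}" "Ci - Cj = {y}"
    using adj_sing[of Ci Cj] fin cards a1 by auto
  obtain x' y' where xy': "Cl - Ci = {x'}" "Ci - Cl = {y'}"
    using adj_sing[of Ci Cl] fin cards a2 by auto
  have "x = x'" using eq xy xy' by simp
  have Cj: "Cj = (Ci - {y}) \<union> {x}" using xy by blast
  have Cl: "Cl = (Ci - {y'}) \<union> {x}" using xy' \<open>x = x'\<close> by blast
  have "y \<noteq> y'" using ne Cj Cl by auto
  then have "Cj \<union> Cl = insert x Ci" using Cj Cl xy by blast
  moreover have "x \<notin> Ci" using xy by blast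
  ultimately have "card (Cj \<union> Cl) = card Cj + 1" using fin cards by simp
  then have "cover_adj Cj Cl" using ne unfolding cover_adj_def by simp
  moreover have "Cj - Ci = Cl - Ci" using xy xy' \<open>x = x'\<close> by simp
  moreover have "cover_adj Cl Ci" using adj_sym a2 cards by metis
  ultimately show ?thesis by simp
qed

lemma strong_sets:
  assumes fin: "finite C1" "finite C2" "finite C3"
    and cards: "card C2 = card C1" "card C3 = card C1"
    and a12: "cover_adj C1 C2" and a23: "cover_adj C2 C3" and a31: "cover_adj C3 C1"
    and eq: "C2 - C1 = C3 - C1"
  shows "C1 - C2 = C3 - C2 \<and> C1 - C3 = C2 - C3"
proof -
  obtain x y where xy: "C2 - C1 = {x}" "C1 - C2 = {y}"
    using adj_sing[of C1 C2] fin cards a12 by auto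
  have a13: "cover_adj C1 C3" using adj_sym a31 cards by metis
  obtain x' y' where xy': "C3 - C1 = {x'}" "C1 - C3 = {y'}"
    using adj_sing[of C1 C3] fin cards a13 by auto
  have "x = x'" using eq xy xy' by simp
  have C2: "C2 = (C1 - {y}) \<union> {x}" using xy by blast
  have C3: "C3 = (C1 - {y'}) \<union> {x}" using xy' \<open>x = x'\<close> by blast
  have "C2 \<noteq> C3" using a23 unfolding cover_adj_def by simp
  then have "y \<noteq> y'" using C2 C3 by auto
  have "x \<notin> C1" "y \<in> C1" "y' \<in> C1" using xy xy' by auto
  then have "C3 - C2 = {y}" "C2 - C3 = {y'}" using C2 C3 \<open>y \<noteq> y'\<close> by auto
  then show ?thesis using xy xy' by simp
qed

lemma memF: "i < j \<Longrightarrow> j < r \<Longrightarrow> cover_adj (cov i) (cov j) \<Longrightarrow> ls_column cov i j \<in> ls_columns cov r"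
  unfolding ls_columns_def by blast

theorem proposition4p10:
  fixes E :: "('v::finite) set set"
    and cov :: "nat \<Rightarrow> 'v set"
    and r :: nat
  assumes "simple_graph E"
    and "unmixed E"
    and "bij_betw cov {..<r} {C. min_vertex_cover E C}"
  shows "minimal_generating_set (ls_columns cov r :: (nat \<Rightarrow> ('v, 'k::field) mpoly) set)
         \<longleftrightarrow> \<not> has_strong_3cycle E"
proof -
  let ?F = "ls_columns cov r :: (nat \<Rightarrow> ('v, 'k::field) mpoly) set"
  have mvc: "\<And>i. i < r \<Longrightarrow> min_vertex_cover E (cov i)"
    using assms(3) unfolding bij_betw_def by auto
  have inj: "\<And>i j. i < r \<Longrightarrow> j < r \<Longrightarrow> cov i = cov j \<Longrightarrow> i = j"
    using assms(3) unfolding bij_betw_def inj_on_def by auto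
  have surj: "\<exists>i<r. cov i = C" if "min_vertex_cover E C" for C
  proof -
    have "C \<in> cov ` {..<r}" using assms(3) that unfolding bij_betw_def by simp
    then show ?thesis by auto
  qed
  have cd: "\<And>i j. i < r \<Longrightarrow> j < r \<Longrightarrow> card (cov i) = card (cov j)"
    using assms(2) mvc unfolding unmixed_def by blast
  have fin: "\<And>C :: 'v set. finite C" by simp
  have antisym: "\<And>x y. x \<noteq> y \<Longrightarrow> (ls_column cov y x :: nat \<Rightarrow> ('v, 'k) mpoly) = - ls_column cov x y"
    by (auto simp: ls_column_def fun_eq_iff)
  show ?thesis
  proof
    assume mg: "minimal_generating_set ?F"
    show "\<not> has_strong_3cycle E"
    proof
      assume "has_strong_3cycle E"
      then obtain C1 C2 C3 where
        m: "min_vertex_cover E C1" "min_vertex_cover E C2" "min_vertex_cover E C3"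
        and a: "cover_adj C1 C2" "cover_adj C2 C3" "cover_adj C3 C1"
        and eq: "C2 - C1 = C3 - C1"
        unfolding has_strong_3cycle_def by blast
      obtain p q s where pqs: "p < r" "q < r" "s < r" "cov p = C1" "cov q = C2" "cov s = C3"
        using surj m by metis
      have cards: "card C2 = card C1" "card C3 = card C1" using cd pqs by metis+
      have ss: "C1 - C2 = C3 - C2 \<and> C1 - C3 = C2 - C3"
        using strong_sets[OF fin fin fin cards a eq] .
      have dist: "p \<noteq> q" "q \<noteq> s" "p \<noteq> s"
        using a pqs unfolding cover_adj_def by auto
      define u :: "nat \<Rightarrow> nat \<Rightarrow> nat \<Rightarrow> ('v, 'k) mpoly" where "u = ls_column cov"
      define col where "col x y = u (min x y) (max x y)" for x y
      have ident: "u p s = u p q + u q s"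
        using dist ss eq pqs by (auto simp: u_def ls_column_def fun_eq_iff)
      have adjs: "\<And>x y. x < r \<Longrightarrow> y < r \<Longrightarrow> cover_adj (cov x) (cov y) \<Longrightarrow> cover_adj (cov y) (cov x)"
        using adj_sym cd by metis
      have colF: "col x y \<in> ?F" if "x < r" "y < r" "x \<noteq> y" "cover_adj (cov x) (cov y)" for x y
      proof (cases "x < y")
        case True
        then have "col x y = ls_column cov x y" by (simp add: col_def u_def)
        then show ?thesis using memF[of x y r cov] True that by simp
      next
        case False
        then have yx: "y < x" using that by simp
        then have "col x y = ls_column cov y x" by (simp add: col_def u_def min_def max_def)
        moreover have "cover_adj (cov y) (cov x)" using adjs that by blast
        ultimately show ?thesis using memF[of y x r cov] yx that by simp
      qed
      have ucol: "u x y = col x y \<or> u x y = - col x y" if "x \<noteq> y" for x y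
      proof (cases "x < y")
        case True then show ?thesis by (simp add: col_def)
      next
        case False
        then have "col x y = u y x" using that by (simp add: col_def min_def max_def)
        also have "\<dots> = - u x y" unfolding u_def using antisym[of x y] that by simp
        finally show ?thesis by simp
      qed
      have uspan: "u x y \<in> fm.span S" if "col x y \<in> S" for x y S
      proof -
        have h: "col x y \<in> fm.span S" using that by (rule fm.span_base)
        show ?thesis
        proof (cases "x = y")
          case True then show ?thesis using h by (simp add: col_def)
        next
          case False then show ?thesis using ucol[of x y] h fm.span_neg by auto
        qed
      qed
      let ?f = "col p s"
      let ?F' = "?F - {?f}"
      have aps: "cover_adj (cov p) (cov s)" using adjs[of s p] pqs a(3) by simp
      have fF: "?f \<in> ?F" using colF[of p s] pqs dist aps by simp
      have colq: "col x y q \<noteq> 0" if "x = q \<or> y = q" "x \<noteq> y" for x y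
        using that unfolding col_def u_def ls_column_def
        by (auto simp: min_def max_def var_nz)
      have fq: "?f q = 0" using dist unfolding col_def u_def ls_column_def
        by (auto simp: min_def max_def)
      have c1: "col p q \<in> ?F'"
        using colF[of p q] pqs dist a colq[of p q] fq by auto
      have c2: "col q s \<in> ?F'"
        using colF[of q s] pqs dist a colq[of q s] fq by auto
      have "u p q + u q s \<in> fm.span ?F'"
        by (rule fm.span_add[OF uspan[OF c1] uspan[OF c2]])
      then have "u p s \<in> fm.span ?F'" using ident by simp
      then have "?f \<in> fm.span ?F'"
      proof -
        have "u p s = ?f \<or> - u p s = ?f" using ucol[of p s] dist by auto
        then show ?thesis
        proof
          assume "u p s = ?f" then show ?thesis using \<open>u p s \<in> fm.span ?F'\<close> by simp
        next
          assume "- u p s = ?f" then show ?thesis using fm.span_neg[OF \<open>u p s \<in> fm.span ?F'\<close>] by simp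
        qed
      qed
      then have "insert ?f ?F' \<subseteq> fm.span ?F'" by (auto intro: fm.span_base)
      then have "fm.span (insert ?f ?F') \<subseteq> fm.span ?F'"
        by (rule fm.span_minimal[OF _ fm.subspace_span])
      moreover have "insert ?f ?F' = ?F" using fF by blast
      ultimately have "fm.span ?F \<subseteq> fm.span ?F'" by simp
      moreover have "fm.span ?F' \<subseteq> fm.span ?F" by (rule fm.span_mono) blast
      ultimately have "submodule_span ?F' = submodule_span ?F"
        by (simp add: span_eq)
      moreover have "?F' \<subset> ?F" using fF by blast
      ultimately show False using mg unfolding minimal_generating_set_def by blast
    qed
  next
    assume ns: "\<not> has_strong_3cycle E"
    have key: "the_elem (cov l - cov i) \<noteq> the_elem (cov j - cov i)"
      if "i < r" "j < r" "l < r" "l \<noteq> j" "cover_adj (cov i) (cov j)" "cover_adj (cov i) (cov l)"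
      for i j l
    proof
      assume eq: "the_elem (cov l - cov i) = the_elem (cov j - cov i)"
      have "cov j \<noteq> cov l" using inj that by blast
      then have "cover_adj (cov j) (cov l) \<and> cov j - cov i = cov l - cov i \<and> cover_adj (cov l) (cov i)"
        by (rule strong_lemma[OF fin fin fin cd[OF that(2,1)] cd[OF that(3,1)] _ that(5,6) eq])
      then have "has_strong_3cycle E"
        unfolding has_strong_3cycle_def
        apply -
        apply (rule exI[of _ "cov i"], rule exI[of _ "cov j"], rule exI[of _ "cov l"])
        using mvc that by simp
      with ns show False by simp
    qed
    have notin: "f \<notin> submodule_span (?F - {f})" if "f \<in> ?F" for f
    proof
      assume "f \<in> submodule_span (?F - {f})"
      then have "\<exists>A a. finite A \<and> A \<subseteq> ?F - {f} \<and> f = (\<lambda>l. \<Sum>g\<in>A. a g * g l)"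
        unfolding submodule_span_def mem_Collect_eq by assumption
      then obtain A a where A: "finite A" "A \<subseteq> ?F - {f}" "f = (\<lambda>l. \<Sum>g\<in>A. a g * g l)"
        by (elim exE conjE) 
      have "\<exists>i j. f = ls_column cov i j \<and> i < j \<and> j < r \<and> cover_adj (cov i) (cov j)"
        using that unfolding ls_columns_def mem_Collect_eq by assumption
      then obtain i j where ij: "i < j" "j < r" "cover_adj (cov i) (cov j)" "f = ls_column cov i j"
        by (elim exE conjE)
      define x where "x = the_elem (cov j - cov i)"
      have fi: "f i = var x" using ij x_def by (simp add: ls_column_def)
      have "Poly_Mapping.lookup (f i) (Poly_Mapping.single x 1) = 1" unfolding fi by (rule var_lookup_self)
      moreover have "Poly_Mapping.lookup (f i) (Poly_Mapping.single x 1) = 0"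
      proof -
        have "Poly_Mapping.lookup (f i) (Poly_Mapping.single x 1) = (\<Sum>g\<in>A. Poly_Mapping.lookup (a g * g i) (Poly_Mapping.single x 1))"
          using A(3) by (simp add: lookup_sum)
        also have "\<dots> = 0"
        proof (rule sum.neutral, rule ballI)
          fix g assume gA: "g \<in> A"
          then obtain i' j' where g: "i' < j'" "j' < r" "cover_adj (cov i') (cov j')" "g = ls_column cov i' j'"
            using A(2) unfolding ls_columns_def by blast
          have gf: "g \<noteq> f" using gA A(2) by blast
          show "Poly_Mapping.lookup (a g * g i) (Poly_Mapping.single x 1) = 0"
          proof (cases "i = i'")
            case True
            then have "j' \<noteq> j" using gf g ij by auto
            then have ne: "the_elem (cov j' - cov i) \<noteq> x"
              using key[of i j j'] g ij True x_def by auto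
            have gi: "g i = var (the_elem (cov j' - cov i))" using g True by (simp add: ls_column_def)
            show ?thesis unfolding gi by (rule var_coeff[OF ne])
          next
            case False
            show ?thesis
            proof (cases "i = j'")
              case True
              then have "i' \<noteq> j" "i' < r" using g ij by auto
              moreover have "cover_adj (cov i) (cov i')"
                using adj_sym cd g True ij by (metis order.strict_trans)
              ultimately have ne: "the_elem (cov i' - cov i) \<noteq> x"
                using key[of i j i'] g ij x_def by auto
              have gi: "g i = - var (the_elem (cov i' - cov i))" using g True False by (simp add: ls_column_def)
              show ?thesis unfolding gi mult_minus_right lookup_uminus var_coeff[OF ne] by simp
            next
              case False2: False
              then show ?thesis using g False by (simp add: ls_column_def)
            qed
          qed
        qed
        finally show ?thesis .
      qed
      ultimately show False by simp
    qed
    show "minimal_generating_set ?F"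
      unfolding minimal_generating_set_def
    proof (intro allI impI)
      fix F' assume sub: "F' \<subset> ?F"
      then obtain f where f: "f \<in> ?F" "f \<notin> F'" by blast
      show "submodule_span F' \<noteq> submodule_span ?F"
      proof
        assume eqs: "submodule_span F' = submodule_span ?F"
        have "f \<in> submodule_span ?F" using f fm.span_base by (simp add: span_eq)
        also have "\<dots> = submodule_span F'" using eqs by simp
        also have "\<dots> \<subseteq> submodule_span (?F - {f})"
          unfolding span_eq by (rule fm.span_mono) (use sub f in blast)
        finally show False using notin f by blast
      qed
    qed
  qed
qed

end
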